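(* Let $(X,+,d)$ be a complete, locally compact Abelian metric group with translation-invariant metric $d$. Then the spectre operator $S:K(X)\to K(X)$ is upper-semicontinuous at every $A\in K(X)$; that is, for every $A\in K(X)$ and every $\varepsilon>0$ there exists $\delta>0$ such that for all $B\in K(X)$ with $d_H(A,B)<\delta$ we have $S(B)\subset S(A)_\varepsilon$.
   Context: $d$ satisfies $d(x,y)=d(x+z,y+z)$ for all $x,y,z\in X$. $K(X)$ is the family of non-empty compact subsets of $X$ with the Pompeiu–Hausdorff metric $d_H(A,B)=\max\{\sup_{a\in A}d(a,B),\sup_{b\in B}d(A,b)\}$. For $C\subset X$, $C_\varepsilon:=\{x\in X:\ \exists_{c\in C}\ d(x,c)<\varepsilon\}$. The spectre of $A\subset X$ is $S(A):=\{z\in X:\ \forall_{a\in A}\ (a+z\in A \text{ or } a-z\in A)\}$; it is compact for compact non-empty $A$. *)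

theory Defs
  imports "HOL-Analysis.Analysis"
begin

text \<open>Pompeiu--Hausdorff distance (used on non-empty compact sets).\<close>
definition hausdorff_dist :: "'a::metric_space set \<Rightarrow> 'a set \<Rightarrow> real" where
  "hausdorff_dist A B = max (SUP a\<in>A. infdist a B) (SUP b\<in>B. infdist b A)"

definition nbhd :: "'a::metric_space set \<Rightarrow> real \<Rightarrow> 'a set" where
  "nbhd C \<epsilon> = {x. \<exists>c\<in>C. dist x c < \<epsilon>}"

definition spectre :: "'a::ab_group_add set \<Rightarrow> 'a set" where
  "spectre A = {z. \<forall>a\<in>A. a + z \<in> A \<or> a - z \<in> A}"

end

theory Submission
  imports Defs
begin

lemma hd_close:
  fixes A B :: "'a::metric_space set"
  assumes "compact A" "B \<noteq> {}" "hausdorff_dist A B < d" "a \<in> A"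
  shows "\<exists>b\<in>B. dist a b < d"
proof -
  have "compact ((\<lambda>a. infdist a B) ` A)"
    by (rule compact_continuous_image) (auto intro: continuous_intros assms)
  then have "bdd_above ((\<lambda>a. infdist a B) ` A)"
    by (meson bounded_imp_bdd_above compact_imp_bounded)
  then have "infdist a B \<le> (SUP a\<in>A. infdist a B)"
    using assms(4) by (rule cSUP_upper2) simp
  also have "\<dots> \<le> hausdorff_dist A B" unfolding hausdorff_dist_def by simp
  finally have "infdist a B < d" using assms(3) by simp
  then have "(INF b\<in>B. dist a b) < d" using assms(2) by (simp add: infdist_notempty)
  then show ?thesis using assms(2) by (simp add: cInf_less_iff bdd_below_image_dist)
qed

lemma hd_close2:
  fixes A B :: "'a::metric_space set"
  assumes "compact B" "A \<noteq> {}" "hausdorff_dist A B < d" "b \<in> B"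
  shows "\<exists>a\<in>A. dist b a < d"
proof -
  have "hausdorff_dist B A < d" using assms(3) unfolding hausdorff_dist_def by (simp add: max.commute)
  then show ?thesis using hd_close[OF assms(1,2) _ assms(4)] by blast
qed

lemma dist_add_le:
  fixes x y x' y' :: "'a::{ab_group_add, metric_space}"
  assumes ti: "\<And>x y z :: 'a. dist x y = dist (x + z) (y + z)"
  shows "dist (x + y) (x' + y') \<le> dist x x' + dist y y'"
proof -
  have "dist (x + y) (x' + y') \<le> dist (x + y) (x' + y) + dist (x' + y) (x' + y')"
    by (rule dist_triangle)
  also have "dist (x + y) (x' + y) = dist x x'" using ti by metis
  also have "dist (x' + y) (x' + y') = dist y y'" using ti[of y y' x'] by (simp add: add.commute)
  finally show ?thesis .
qed

lemma dist_minus_eq: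
  fixes x y :: "'a::{ab_group_add, metric_space}"
  assumes ti: "\<And>x y z :: 'a. dist x y = dist (x + z) (y + z)"
  shows "dist (- x) (- y) = dist x y"
proof -
  have "dist (- x) (- y) = dist (- x + (x + y)) (- y + (x + y))" using ti by metis
  also have "\<dots> = dist y x" by (simp add: algebra_simps)
  finally show ?thesis by (simp add: dist_commute)
qed

lemma dist_diff_le:
  fixes x y x' y' :: "'a::{ab_group_add, metric_space}"
  assumes ti: "\<And>x y z :: 'a. dist x y = dist (x + z) (y + z)"
  shows "dist (x - y) (x' - y') \<le> dist x x' + dist y y'"
  using dist_add_le[OF ti, of x "-y" x' "-y'"] dist_minus_eq[OF ti, of y y'] by simp

theorem theorem3p12:
  assumes transl_inv: "\<And>x y z :: 'a::{ab_group_add, metric_space}. dist x y = dist (x + z) (y + z)"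
    and complete_X: "complete (UNIV :: 'a set)"
    and loc_compact: "locally compact (UNIV :: 'a set)"
    and A_cpt: "compact A" and A_ne: "A \<noteq> {}"
    and eps_pos: "\<epsilon> > 0"
  shows "\<exists>\<delta>>0. \<forall>B::'a set. compact B \<and> B \<noteq> {} \<and> hausdorff_dist A B < \<delta> \<longrightarrow>
           spectre B \<subseteq> nbhd (spectre A) \<epsilon>"
proof (rule ccontr)
  assume neg: "\<not> ?thesis"
  have "\<forall>n. \<exists>B z. compact B \<and> B \<noteq> {} \<and> hausdorff_dist A B < 1 / Suc n \<and>
     z \<in> spectre B \<and> (\<forall>s\<in>spectre A. \<epsilon> \<le> dist z s)"
  proof
    fix n :: nat
    have pos: "1 / real (Suc n) > 0" by simp
    obtain B where B1: "compact B" "B \<noteq> {}" "hausdorff_dist A B < 1 / real (Suc n)"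
      and B2: "\<not> spectre B \<subseteq> nbhd (spectre A) \<epsilon>"
      using neg pos by blast
    then obtain z where "z \<in> spectre B" "z \<notin> nbhd (spectre A) \<epsilon>" by blast
    then show "\<exists>B z. compact B \<and> B \<noteq> {} \<and> hausdorff_dist A B < 1 / Suc n \<and>
     z \<in> spectre B \<and> (\<forall>s\<in>spectre A. \<epsilon> \<le> dist z s)"
      using B1 unfolding nbhd_def by (auto simp: not_less)
  qed
  then obtain B z where B: "\<And>n. compact (B n)" "\<And>n. B n \<noteq> {}"
    "\<And>n. hausdorff_dist A (B n) < 1 / Suc n"
    and z: "\<And>n. z n \<in> spectre (B n)" "\<And>n s. s \<in> spectre A \<Longrightarrow> \<epsilon> \<le> dist (z n) s"
    by metis
  have "\<exists>p q. p \<in> A \<and> q \<in> A \<and> dist (z n) (p - q) < 2 / Suc n" for n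
  proof -
    obtain b where b: "b \<in> B n" using B(2) by blast
    have "\<exists>x\<in>B n. \<exists>y\<in>B n. z n = x - y"
    proof (cases "b + z n \<in> B n")
      case True then show ?thesis using b by (intro bexI[of _ "b + z n"] bexI[of _ b]) auto
    next
      case False then have "b - z n \<in> B n" using z(1)[of n] b unfolding spectre_def by blast
      then show ?thesis using b by (intro bexI[of _ "b"] bexI[of _ "b - z n"]) auto
    qed
    then obtain x y where xy: "x \<in> B n" "y \<in> B n" "z n = x - y" by blast
    obtain p where p: "p \<in> A" "dist x p < 1 / Suc n" using hd_close2[OF B(1) A_ne B(3) xy(1)] by blast
    obtain q where q: "q \<in> A" "dist y q < 1 / Suc n" using hd_close2[OF B(1) A_ne B(3) xy(2)] by blast
    have "dist (z n) (p - q) \<le> dist x p + dist y q" using xy(3) dist_diff_le[OF transl_inv] by simp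
    also have "\<dots> < 2 / Suc n" using p q by simp
    finally show ?thesis using p q by blast
  qed
  then obtain p q where pq: "\<And>n. p n \<in> A" "\<And>n. q n \<in> A" "\<And>n. dist (z n) (p n - q n) < 2 / Suc n"
    by metis
  have cAA: "compact (A \<times> A)" using A_cpt by (rule compact_Times[OF _ A_cpt])
  have sc: "seq_compact (A \<times> A)" by (rule compact_imp_seq_compact[OF cAA])
  have inAA: "\<forall>n. (p n, q n) \<in> A \<times> A" using pq(1,2) by blast
  obtain l r where l: "l \<in> A \<times> A" and r: "strict_mono r"
    and lim: "((\<lambda>n. (p n, q n)) \<circ> r) \<longlonglongrightarrow> l"
    by (rule seq_compactE[OF sc inAA])
  obtain u v where luv: "l = (u, v)" by (cases l) blast
  have pu: "(\<lambda>n. p (r n)) \<longlonglongrightarrow> u"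
    using tendsto_fst[OF lim] unfolding luv o_def fst_conv .
  have qv: "(\<lambda>n. q (r n)) \<longlonglongrightarrow> v"
    using tendsto_snd[OF lim] unfolding luv o_def snd_conv .
  define w where "w = u - v"
  have inv0: "(\<lambda>n. 2 / real (Suc (r n))) \<longlonglongrightarrow> 0"
  proof -
    have "(\<lambda>n. 2 * inverse (real (Suc n))) \<longlonglongrightarrow> 0"
      using tendsto_mult_right_zero[OF LIMSEQ_inverse_real_of_nat, of 2] .
    then have "(\<lambda>n. 2 / real (Suc n)) \<longlonglongrightarrow> 0"
      by (simp add: divide_inverse)
    from LIMSEQ_subseq_LIMSEQ[OF this r] show ?thesis unfolding o_def .
  qed
  have zw: "(\<lambda>n. z (r n)) \<longlonglongrightarrow> w"
  proof (rule tendstoI)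
    fix e :: real assume e: "e > 0"
    then have e3: "e/3 > 0" by simp
    have "\<forall>\<^sub>F n in sequentially. dist (p (r n)) u < e/3" using tendstoD[OF pu e3] .
    moreover have "\<forall>\<^sub>F n in sequentially. dist (q (r n)) v < e/3" using tendstoD[OF qv e3] .
    moreover have "\<forall>\<^sub>F n in sequentially. dist (2 / real (Suc (r n))) 0 < e/3"
      using tendstoD[OF inv0 e3] .
    ultimately show "\<forall>\<^sub>F n in sequentially. dist (z (r n)) w < e"
    proof eventually_elim
      case (elim n)
      have "dist (z (r n)) w \<le> dist (z (r n)) (p (r n) - q (r n)) + dist (p (r n) - q (r n)) w"
        by (rule dist_triangle)
      also have "dist (p (r n) - q (r n)) w \<le> dist (p (r n)) u + dist (q (r n)) v"
        unfolding w_def by (rule dist_diff_le[OF transl_inv])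
      finally have "dist (z (r n)) w \<le> dist (z (r n)) (p (r n) - q (r n)) + (dist (p (r n)) u + dist (q (r n)) v)"
        by simp
      moreover have "dist (z (r n)) (p (r n) - q (r n)) < 2 / real (Suc (r n))" using pq(3)[of "r n"] by simp
      moreover have "2 / real (Suc (r n)) < e/3" using elim(3) by simp
      ultimately show ?case using elim(1,2) by linarith
    qed
  qed
  have "a + w \<in> A \<or> a - w \<in> A" if a: "a \<in> A" for a
  proof (rule ccontr)
    assume nn: "\<not> (a + w \<in> A \<or> a - w \<in> A)"
    have cl: "closed A" using A_cpt by (rule compact_imp_closed)
    have h1: "infdist (a + w) A > 0" using nn cl A_ne in_closed_iff_infdist_zero infdist_nonneg
      by (metis less_eq_real_def)
    have h2: "infdist (a - w) A > 0" using nn cl A_ne in_closed_iff_infdist_zero infdist_nonneg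
      by (metis less_eq_real_def)
    define \<eta> where "\<eta> = min (infdist (a + w) A) (infdist (a - w) A)"
    have eta: "\<eta> > 0" using h1 h2 by (simp add: \<eta>_def)
    have eta3: "\<eta>/3 > 0" using eta by simp
    have "\<forall>\<^sub>F n in sequentially. dist (z (r n)) w < \<eta>/3" using tendstoD[OF zw eta3] .
    moreover have "\<forall>\<^sub>F n in sequentially. dist (2 / real (Suc (r n))) 0 < \<eta>/3"
      using tendstoD[OF inv0 eta3] .
    ultimately have "\<forall>\<^sub>F n in sequentially. dist (z (r n)) w < \<eta>/3 \<and> dist (2 / real (Suc (r n))) 0 < \<eta>/3"
      by (rule eventually_conj)
    then obtain N where "\<forall>n\<ge>N. dist (z (r n)) w < \<eta>/3 \<and> dist (2 / real (Suc (r n))) 0 < \<eta>/3"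
      unfolding eventually_sequentially by blast
    then have n1: "dist (z (r N)) w < \<eta>/3" and n2: "2 / real (Suc (r N)) < \<eta>/3" by auto
    define n where "n = N"
    note n1 = n1[folded n_def] and n2 = n2[folded n_def]
    define m where "m = r n"
    have m1: "dist (z m) w < \<eta>/3" and m2: "1 / real (Suc m) < \<eta>/3"
      using n1 n2 unfolding m_def by (auto simp: divide_simps)
    obtain b where b: "b \<in> B m" "dist a b < 1 / Suc m" using hd_close[OF A_cpt B(2) B(3) a] by blast
    show False
    proof (cases "b + z m \<in> B m")
      case True
      obtain c where c: "c \<in> A" "dist (b + z m) c < 1 / Suc m"
        using hd_close2[OF B(1) A_ne B(3) True] by blast
      have "dist (a + w) c \<le> dist (a + w) (b + z m) + dist (b + z m) c" by (rule dist_triangle)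
      also have "dist (a + w) (b + z m) \<le> dist a b + dist w (z m)" by (rule dist_add_le[OF transl_inv])
      finally have "dist (a + w) c < \<eta>" using b c m1 m2 by (simp add: dist_commute)
      moreover have "infdist (a + w) A \<le> dist (a + w) c" using c(1) by (rule infdist_le)
      ultimately show False unfolding \<eta>_def by linarith
    next
      case False
      then have F: "b - z m \<in> B m" using z(1)[of m] b unfolding spectre_def by blast
      obtain c where c: "c \<in> A" "dist (b - z m) c < 1 / Suc m"
        using hd_close2[OF B(1) A_ne B(3) F] by blast
      have "dist (a - w) c \<le> dist (a - w) (b - z m) + dist (b - z m) c" by (rule dist_triangle)
      also have "dist (a - w) (b - z m) \<le> dist a b + dist w (z m)" by (rule dist_diff_le[OF transl_inv])
      finally have "dist (a - w) c < \<eta>" using b c m1 m2 by (simp add: dist_commute)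
      moreover have "infdist (a - w) A \<le> dist (a - w) c" using c(1) by (rule infdist_le)
      ultimately show False unfolding \<eta>_def by linarith
    qed
  qed
  then have "w \<in> spectre A" unfolding spectre_def by blast
  then have "\<And>n. \<epsilon> \<le> dist (z (r n)) w" using z(2) by blast
  moreover have "\<forall>\<^sub>F n in sequentially. dist (z (r n)) w < \<epsilon>" using tendstoD[OF zw eps_pos] .
  ultimately show False unfolding eventually_sequentially by (meson linorder_not_le order_refl)
qed

end
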